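(* Let $K_1$ and $K_2$ be compact (Hausdorff) spaces neither of which contains an uncountable metrizable closed subspace. Then $\mathcal C_p(K_1\times K_2)$ does not contain a complemented copy of $\mathcal C_p(L)$ for any uncountable metric compact space $L$.
   Context: For a compact space $K$, $\mathcal C_p(K)$ denotes the vector space of continuous real-valued functions on $K$ with the topology of pointwise convergence. $\mathcal C_p(K)$ contains a complemented copy of a topological vector space $X$ if there are closed linear subspaces $E,F$ of $\mathcal C_p(K)$ with $\mathcal C_p(K)=E\oplus F$ algebraically, such that the canonical projections onto $E$ and $F$ are continuous and $E$ is linearly homeomorphic (isomorphic as a topological vector space) to $X$. *)

theory Defs
  imports "HOL-Analysis.Analysis"
begin

text \<open>C_p(K): continuous real functions on the topological space K (normalised to be 0
  outside the carrier of K, so that they are determined by their values on K), with the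
  topology of pointwise convergence, i.e. the subspace topology of the product topology
  on 'a => real (the library's euclidean topology on function spaces).\<close>

definition Cp_set :: "'a topology \<Rightarrow> ('a \<Rightarrow> real) set" where
  "Cp_set K = {f. continuous_map K euclideanreal f \<and> (\<forall>x. x \<notin> topspace K \<longrightarrow> f x = 0)}"

definition Cp_top :: "'a topology \<Rightarrow> ('a \<Rightarrow> real) topology" where
  "Cp_top K = subtopology euclidean (Cp_set K)"

definition lin_subspace :: "('a \<Rightarrow> real) set \<Rightarrow> bool" where
  "lin_subspace E \<longleftrightarrow> (\<lambda>x. 0) \<in> E \<and>
     (\<forall>f\<in>E. \<forall>g\<in>E. (\<lambda>x. f x + g x) \<in> E) \<and>
     (\<forall>c. \<forall>f\<in>E. (\<lambda>x. c * f x) \<in> E)"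

definition lin_map_on :: "('a \<Rightarrow> real) set \<Rightarrow> (('a \<Rightarrow> real) \<Rightarrow> ('b \<Rightarrow> real)) \<Rightarrow> bool" where
  "lin_map_on E T \<longleftrightarrow>
     (\<forall>f\<in>E. \<forall>g\<in>E. T (\<lambda>x. f x + g x) = (\<lambda>y. T f y + T g y)) \<and>
     (\<forall>c. \<forall>f\<in>E. T (\<lambda>x. c * f x) = (\<lambda>y. c * T f y))"

definition contains_complemented_Cp :: "'a topology \<Rightarrow> 'b topology \<Rightarrow> bool" where
  "contains_complemented_Cp K L \<longleftrightarrow>
    (\<exists>E F. E \<subseteq> Cp_set K \<and> F \<subseteq> Cp_set K \<and> lin_subspace E \<and> lin_subspace F \<and>
       closedin (Cp_top K) E \<and> closedin (Cp_top K) F \<and>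
       E \<inter> F = {\<lambda>x. 0} \<and>
       (\<exists>P Q. (\<forall>h\<in>Cp_set K. P h \<in> E \<and> Q h \<in> F \<and> h = (\<lambda>x. P h x + Q h x)) \<and>
              continuous_map (Cp_top K) (Cp_top K) P \<and>
              continuous_map (Cp_top K) (Cp_top K) Q) \<and>
       (\<exists>T. lin_map_on E T \<and> homeomorphic_map (subtopology (Cp_top K) E) (Cp_top L) T))"

end

theory Submission
  imports Defs
begin
lemma (in Metric_space) compact_second_countable:
  assumes "compact_space mtopology" shows "second_countable mtopology"
proof -
  have tb: "mtotally_bounded M" using assms compact_space_eq_mcomplete_mtotally_bounded by blast
  have "\<forall>k::nat. \<exists>C. finite C \<and> C \<subseteq> M \<and> M \<subseteq> (\<Union>x\<in>C. mball x (1 / real (Suc k)))"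
    using tb unfolding mtotally_bounded_def by simp
  then obtain C where C: "\<And>k. finite (C k) \<and> C k \<subseteq> M \<and> M \<subseteq> (\<Union>x\<in>C k. mball x (1 / real (Suc k)))"
    by metis
  define B where "B = (\<Union>k. (\<lambda>x. mball x (1 / real (Suc k))) ` C k)"
  show ?thesis unfolding second_countable_def
  proof (intro exI conjI ballI allI impI)
    show "countable B" unfolding B_def
      by (intro countable_UN countableI_type countable_image countable_finite C[THEN conjunct1])
    show "openin mtopology V" if "V \<in> B" for V using that unfolding B_def by auto
    fix U x assume "openin mtopology U \<and> x \<in> U"
    then obtain r where r: "r > 0" "mball x r \<subseteq> U" and xM: "x \<in> M"
      by (meson openin_mtopology subsetD)
    obtain n::nat where n: "n \<noteq> 0" "inverse (real n) < r/2"
      using real_arch_inverse[of "r/2"] r by auto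
    then obtain k where k: "n = Suc k" using not0_implies_Suc by blast
    have ik: "1 / real (Suc k) < r/2" using n k by (simp add: inverse_eq_divide)
    obtain c where c: "c \<in> C k" "x \<in> mball c (1 / real (Suc k))" using C[of k] xM by blast
    show "\<exists>V\<in>B. x \<in> V \<and> V \<subseteq> U"
    proof (intro bexI conjI)
      show "x \<in> mball c (1 / real (Suc k))" by fact
      show "mball c (1 / real (Suc k)) \<in> B" unfolding B_def using c by blast
      have "mball c (1 / real (Suc k)) \<subseteq> mball x r"
      proof
        fix y assume y: "y \<in> mball c (1 / real (Suc k))"
        have "d x y \<le> d x c + d c y" using y c xM triangle by auto
        also have "\<dots> < r" using y c ik by (auto simp: commute)
        finally show "y \<in> mball x r" using xM y by auto
      qed
      then show "mball c (1 / real (Suc k)) \<subseteq> U" using r by blast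
    qed
  qed
qed

lemma compact_metrizable_second_countable:
  assumes "metrizable_space X" "compact_space X" shows "second_countable X"
proof -
  obtain M d where "Metric_space M d" "X = Metric_space.mtopology M d"
    using assms(1) unfolding metrizable_space_def by blast
  then show ?thesis using Metric_space.compact_second_countable assms(2) by blast
qed

lemma second_countable_image:
  assumes X: "compact_space X" "second_countable X" and Y: "Hausdorff_space Y"
    and f: "continuous_map X Y f" "f ` topspace X = topspace Y"
  shows "second_countable Y"
proof -
  obtain B where B0: "countable B \<and> (\<forall>V \<in> B. openin X V) \<and>
             (\<forall>U x. openin X U \<and> x \<in> U \<longrightarrow> (\<exists>V \<in> B. x \<in> V \<and> V \<subseteq> U))"
    using X(2) unfolding second_countable_def by (elim exE)
  have B: "countable B" "\<And>V. V \<in> B \<Longrightarrow> openin X V"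
     "\<And>U x. openin X U \<Longrightarrow> x \<in> U \<Longrightarrow> \<exists>V\<in>B. x \<in> V \<and> V \<subseteq> U"
    using B0 by auto
  define BY where "BY = (\<lambda>F. topspace Y - f ` (topspace X - \<Union>F)) ` {F. finite F \<and> F \<subseteq> B}"
  have cm: "closed_map X Y f" by (rule continuous_imp_closed_map[OF f(1) X(1) Y])
  show ?thesis unfolding second_countable_def
  proof (intro exI conjI ballI allI impI)
    show "countable BY" unfolding BY_def
      by (intro countable_image countable_Collect_finite_subset B(1))
    show "openin Y V" if VBY: "V \<in> BY" for V
    proof -
      obtain F where F3: "V = topspace Y - f ` (topspace X - \<Union>F)" and F0: "F \<in> {F. finite F \<and> F \<subseteq> B}"
        using VBY unfolding BY_def by (rule imageE)
      have F: "finite F" "F \<subseteq> B" "V = topspace Y - f ` (topspace X - \<Union>F)" using F0 F3 by auto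
      have "openin X (\<Union>F)" by (rule openin_Union) (use F B(2) in blast)
      then have "closedin X (topspace X - \<Union>F)" by (rule closedin_diff[OF closedin_topspace])
      then have "closedin Y (f ` (topspace X - \<Union>F))" using cm unfolding closed_map_def by simp
      then show ?thesis unfolding F(3) by (rule openin_diff[OF openin_topspace])
    qed
    fix Op z assume Oz: "openin Y Op \<and> z \<in> Op"
    define Fz where "Fz = {x \<in> topspace X. f x \<in> {z}}"
    have zt: "z \<in> topspace Y" using Oz openin_subset by blast
    have "closedin X Fz" unfolding Fz_def
      using closedin_continuous_map_preimage[OF f(1)] closedin_Hausdorff_singleton[OF Y zt] by blast
    then have cFz: "compactin X Fz" using closedin_compact_space X(1) by blast
    define P where "P = {x \<in> topspace X. f x \<in> Op}"
    have oP: "openin X P" unfolding P_def using openin_continuous_map_preimage[OF f(1)] Oz by blast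
    have "Fz \<subseteq> \<Union>{V\<in>B. V \<subseteq> P}"
    proof
      fix x assume "x \<in> Fz"
      then have "x \<in> P" unfolding Fz_def P_def using Oz by auto
      then show "x \<in> \<Union>{V\<in>B. V \<subseteq> P}" using B(3)[OF oP] by blast
    qed
    then obtain F where F: "finite F" "F \<subseteq> {V\<in>B. V \<subseteq> P}" "Fz \<subseteq> \<Union>F"
    proof -
      have "\<forall>V\<in>{V\<in>B. V \<subseteq> P}. openin X V" using B(2) by blast
      then show ?thesis using cFz \<open>Fz \<subseteq> \<Union>{V\<in>B. V \<subseteq> P}\<close> that unfolding compactin_def by meson
    qed
    show "\<exists>V\<in>BY. z \<in> V \<and> V \<subseteq> Op"
    proof (intro bexI conjI)
      show "topspace Y - f ` (topspace X - \<Union>F) \<in> BY" unfolding BY_def using F by blast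
      show "z \<in> topspace Y - f ` (topspace X - \<Union>F)"
        using zt F(3) unfolding Fz_def by auto
      show "topspace Y - f ` (topspace X - \<Union>F) \<subseteq> Op"
      proof
        fix y assume y: "y \<in> topspace Y - f ` (topspace X - \<Union>F)"
        then obtain x where x: "x \<in> topspace X" "y = f x" using f(2) by blast
        with y have "x \<in> \<Union>F" by blast
        then have "x \<in> P" using F(2) by blast
        then show "y \<in> Op" using x unfolding P_def by simp
      qed
    qed
  qed
qed

lemma compact_Hausdorff_second_countable_metrizable:
  assumes cY: "compact_space Y" and hY: "Hausdorff_space Y" and sY: "second_countable Y"
  shows "metrizable_space Y"
proof -
  obtain B where B0: "countable B \<and> (\<forall>V \<in> B. openin Y V) \<and>
             (\<forall>U x. openin Y U \<and> x \<in> U \<longrightarrow> (\<exists>V \<in> B. x \<in> V \<and> V \<subseteq> U))"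
    using sY unfolding second_countable_def by (elim exE)
  have B: "countable B" "\<And>V. V \<in> B \<Longrightarrow> openin Y V"
     "\<And>U x. openin Y U \<Longrightarrow> x \<in> U \<Longrightarrow> \<exists>V\<in>B. x \<in> V \<and> V \<subseteq> U"
    using B0 by auto
  have reg: "regular_space Y" by (rule compact_Hausdorff_imp_regular_space[OF cY hY])
  have nor: "normal_space Y" using compact_Hausdorff_or_regular_imp_normal_space cY hY by blast
  define I where "I = B \<times> B"
  define P where "P = (\<lambda>p g. continuous_map Y euclideanreal g \<and>
      (Y closure_of (fst p) \<subseteq> snd p \<longrightarrow> g ` (Y closure_of (fst p)) \<subseteq> {0} \<and> g ` (topspace Y - snd p) \<subseteq> {1::real}))"
  define g where "g = (\<lambda>p. SOME g. P p g)"
  have g: "P p (g p)" if p: "p \<in> I" for p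
  proof -
    have "\<exists>g. P p g"
    proof (cases "Y closure_of fst p \<subseteq> snd p")
      case True
      have c1: "closedin Y (Y closure_of fst p)" by simp
      have "openin Y (snd p)" using p B(2) unfolding I_def by auto
      then have c2: "closedin Y (topspace Y - snd p)" by (rule closedin_diff[OF closedin_topspace])
      have d: "disjnt (Y closure_of fst p) (topspace Y - snd p)" using True by (auto simp: disjnt_def)
      obtain h where "continuous_map Y euclideanreal h" "h ` (Y closure_of fst p) \<subseteq> {0::real}"
          "h ` (topspace Y - snd p) \<subseteq> {1}"
        using Urysohn_lemma_alt[OF nor c1 c2 d] by metis
      then show ?thesis unfolding P_def by blast
    next
      case False
      then show ?thesis unfolding P_def by (intro exI[of _ "\<lambda>_. 0"]) simp
    qed
    then show ?thesis unfolding g_def by (rule someI_ex)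
  qed
  define e where "e = (\<lambda>y. restrict (\<lambda>p. g p y) I)"
  have ce: "continuous_map Y (product_topology (\<lambda>_. euclideanreal) I) e"
    unfolding continuous_map_componentwise
  proof
    show "e ` topspace Y \<subseteq> extensional I" unfolding e_def by auto
    show "\<forall>k\<in>I. continuous_map Y euclideanreal (\<lambda>x. e x k)"
    proof
      fix k assume k: "k \<in> I"
      have "continuous_map Y euclideanreal (g k)" using g[OF k] unfolding P_def by blast
      then show "continuous_map Y euclideanreal (\<lambda>x. e x k)" unfolding e_def using k by simp
    qed
  qed
  have inj: "inj_on e (topspace Y)"
  proof (rule inj_onI)
    fix z z' assume z: "z \<in> topspace Y" and z': "z' \<in> topspace Y" and ez: "e z = e z'"
    show "z = z'"
    proof (rule ccontr)
      assume ne: "z \<noteq> z'"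
      have "closedin Y {z'}" by (rule closedin_Hausdorff_singleton[OF hY z'])
      then have "openin Y (topspace Y - {z'})" by (rule openin_diff[OF openin_topspace])
      moreover have "z \<in> topspace Y - {z'}" using z ne by blast
      ultimately obtain O2 where O2: "O2 \<in> B" "z \<in> O2" "O2 \<subseteq> topspace Y - {z'}"
        using B(3) by meson
      have "neighbourhood_base_of (closedin Y) Y" using reg neighbourhood_base_of_closedin by blast
      then obtain U V where UV: "openin Y U" "closedin Y V" "z \<in> U" "U \<subseteq> V" "V \<subseteq> O2"
        unfolding neighbourhood_base_of using B(2)[OF O2(1)] O2(2) by meson
      obtain O1 where O1: "O1 \<in> B" "z \<in> O1" "O1 \<subseteq> U" using B(3)[OF UV(1) UV(3)] by blast
      have cl: "Y closure_of O1 \<subseteq> O2"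
        using closure_of_minimal[of O1 V Y] UV O1 by blast
      have pI: "(O1, O2) \<in> I" unfolding I_def using O1 O2 by blast
      have Pp: "P (O1,O2) (g (O1,O2))" by (rule g[OF pI])
      have "z \<in> Y closure_of O1" using closure_of_subset[of O1 Y] O1 B(2)[OF O1(1)] openin_subset by blast
      then have g0: "g (O1,O2) z = 0" using Pp cl unfolding P_def by auto
      have "z' \<in> topspace Y - O2" using z' O2 by blast
      then have g1: "g (O1,O2) z' = 1" using Pp cl unfolding P_def by auto
      have "e z (O1,O2) = e z' (O1,O2)" using ez by simp
      then show False using g0 g1 pI unfolding e_def by simp
    qed
  qed
  have hP: "Hausdorff_space (product_topology (\<lambda>_. euclideanreal) I)"
    by (simp add: Hausdorff_space_product_topology)
  have emb: "embedding_map Y (product_topology (\<lambda>_. euclideanreal) I) e"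
    by (rule continuous_imp_embedding_map[OF ce cY hP inj])
  have cI: "countable I" unfolding I_def using B(1) by (simp add: countable_SIGMA)
  have mP: "metrizable_space (product_topology (\<lambda>_. euclideanreal) I)"
  proof (rule metrizable_topology_D)
    show "topspace (product_topology (\<lambda>_. euclideanreal) I) \<noteq> {}"
    proof -
      have "(\<lambda>p\<in>I. 0::real) \<in> topspace (product_topology (\<lambda>_. euclideanreal) I)" by simp
      then show ?thesis by blast
    qed
    show "countable {i \<in> I. \<nexists>a. topspace euclideanreal \<subseteq> {a}}"
      by (rule countable_subset[OF _ cI]) blast
    show "\<And>i. i \<in> I \<Longrightarrow> metrizable_space euclideanreal" by (simp add: metrizable_space_euclidean)
  qed
  show ?thesis
    using embedding_map_imp_homeomorphic_space[OF emb] homeomorphic_metrizable_space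
      metrizable_space_subtopology[OF mP] by blast
qed

lemma metrizable_image:
  assumes cX: "compact_space X" and mX: "metrizable_space X" and hY: "Hausdorff_space Y"
    and f: "continuous_map X Y f"
  shows "metrizable_space (subtopology Y (f ` topspace X))"
proof -
  let ?Z = "subtopology Y (f ` topspace X)"
  have c: "continuous_map X ?Z f" using f by (simp add: continuous_map_in_subtopology)
  have ts: "f ` topspace X = topspace ?Z"
    using continuous_map_image_subset_topspace[OF f] by auto
  have "compactin Y (f ` topspace X)"
    by (rule image_compactin[OF _ f]) (use cX in \<open>simp add: compact_space_def\<close>)
  then have cZ: "compact_space ?Z" by (rule compact_space_subtopology)
  have hZ: "Hausdorff_space ?Z" using hY by (rule Hausdorff_space_subtopology)
  have sZ: "second_countable ?Z"
    by (rule second_countable_image[OF cX compact_metrizable_second_countable[OF mX cX] hZ c ts])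
  show ?thesis by (rule compact_Hausdorff_second_countable_metrizable[OF cZ hZ sZ])
qed

lemma prod_no_metrizable:
  assumes c1: "compact_space K1" and h1: "Hausdorff_space K1"
    and c2: "compact_space K2" and h2: "Hausdorff_space K2"
    and n1: "\<not> (\<exists>S. closedin K1 S \<and> uncountable S \<and> metrizable_space (subtopology K1 S))"
    and n2: "\<not> (\<exists>S. closedin K2 S \<and> uncountable S \<and> metrizable_space (subtopology K2 S))"
  shows "\<not> (\<exists>S. closedin (prod_topology K1 K2) S \<and> uncountable S \<and>
              metrizable_space (subtopology (prod_topology K1 K2) S))"
proof
  assume "\<exists>S. closedin (prod_topology K1 K2) S \<and> uncountable S \<and>
              metrizable_space (subtopology (prod_topology K1 K2) S)"
  then obtain S where S: "closedin (prod_topology K1 K2) S" "uncountable S"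
     "metrizable_space (subtopology (prod_topology K1 K2) S)" by blast
  let ?X = "subtopology (prod_topology K1 K2) S"
  have Ssub: "S \<subseteq> topspace (prod_topology K1 K2)" using closedin_subset S(1) by blast
  have tX: "topspace ?X = S" using Ssub by auto
  have cP: "compact_space (prod_topology K1 K2)" using c1 c2 compact_space_prod_topology by blast
  have cX: "compact_space ?X"
    by (rule compact_space_subtopology[OF closedin_compact_space[OF cP S(1)]])
  have f1: "continuous_map ?X K1 fst" by (rule continuous_map_from_subtopology[OF continuous_map_fst])
  have f2: "continuous_map ?X K2 snd" by (rule continuous_map_from_subtopology[OF continuous_map_snd])
  have "compactin ?X (topspace ?X)" using cX by (simp add: compact_space_def)
  then have k1: "compactin K1 (fst ` S)" and k2: "compactin K2 (snd ` S)"
    using image_compactin[OF _ f1] image_compactin[OF _ f2] tX by auto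
  have m1: "metrizable_space (subtopology K1 (fst ` S))" using metrizable_image[OF cX S(3) h1 f1] tX by simp
  have m2: "metrizable_space (subtopology K2 (snd ` S))" using metrizable_image[OF cX S(3) h2 f2] tX by simp
  have "countable (fst ` S)" using n1 m1 compactin_imp_closedin[OF h1 k1] by blast
  moreover have "countable (snd ` S)" using n2 m2 compactin_imp_closedin[OF h2 k2] by blast
  ultimately have "countable (fst ` S \<times> snd ` S)" by (simp add: countable_SIGMA)
  moreover have "S \<subseteq> fst ` S \<times> snd ` S" by force
  ultimately show False using S(2) countable_subset by blast
qed

lemma Cp_cont: "f \<in> Cp_set X \<Longrightarrow> continuous_map X euclideanreal f"
  unfolding Cp_set_def by blast

lemma Cp_out: "f \<in> Cp_set X \<Longrightarrow> x \<notin> topspace X \<Longrightarrow> f x = 0"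
  unfolding Cp_set_def by blast

lemma Cp_zero: "(\<lambda>x. 0) \<in> Cp_set X"
  unfolding Cp_set_def by simp

lemma Cp_add: "f \<in> Cp_set X \<Longrightarrow> g \<in> Cp_set X \<Longrightarrow> (\<lambda>x. f x + g x) \<in> Cp_set X"
  unfolding Cp_set_def by (auto intro: continuous_map_add)

lemma Cp_mult: "f \<in> Cp_set X \<Longrightarrow> g \<in> Cp_set X \<Longrightarrow> (\<lambda>x. f x * g x) \<in> Cp_set X"
  unfolding Cp_set_def by (auto intro: continuous_map_real_mult)

lemma Cp_scale: "f \<in> Cp_set X \<Longrightarrow> (\<lambda>x. c * f x) \<in> Cp_set X"
  unfolding Cp_set_def by (auto intro: continuous_map_real_mult)

lemma Cp_diff: "f \<in> Cp_set X \<Longrightarrow> g \<in> Cp_set X \<Longrightarrow> (\<lambda>x. f x - g x) \<in> Cp_set X"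
  unfolding Cp_set_def by (auto intro: continuous_map_diff)

lemma topspace_Cp [simp]: "topspace (Cp_top X) = Cp_set X"
  unfolding Cp_top_def by simp

lemma Cp_eval_cont: "continuous_map (Cp_top X) euclideanreal (\<lambda>f. f y)"
proof -
  have "continuous_map (product_topology (\<lambda>i. euclideanreal) UNIV) euclideanreal (\<lambda>f. f y)"
    by (rule continuous_map_product_projection) simp
  then have "continuous_map (euclidean :: ('a \<Rightarrow> real) topology) euclideanreal (\<lambda>f. f y)"
    by (simp add: euclidean_product_topology)
  then show ?thesis unfolding Cp_top_def by (rule continuous_map_from_subtopology)
qed

lemma Cp_bump:
  assumes nX: "normal_space X" and tX: "t1_space X" and x: "x \<in> topspace X"
    and V: "openin X V" "x \<in> V"
  shows "\<exists>h\<in>Cp_set X. h x = 1 \<and> (\<forall>z. z \<notin> V \<longrightarrow> h z = 0)"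
proof -
  have c1: "closedin X {x}" using t1_space_closedin_singleton[THEN iffD1, OF tX] x by blast
  have c2: "closedin X (topspace X - V)" by (rule closedin_diff[OF closedin_topspace V(1)])
  have d: "disjnt {x} (topspace X - V)" using V(2) by (auto simp: disjnt_def)
  obtain f where f: "continuous_map X euclideanreal f" "f ` {x} \<subseteq> {1::real}" "f ` (topspace X - V) \<subseteq> {0}"
    using Urysohn_lemma_alt[OF nX c1 c2 d] by metis
  define h where "h = (\<lambda>z. if z \<in> topspace X then f z else 0)"
  have "continuous_map X euclideanreal h"
    by (rule continuous_map_eq[OF f(1)]) (simp add: h_def)
  then have "h \<in> Cp_set X" unfolding Cp_set_def h_def by simp
  moreover have "h x = 1" using f(2) x unfolding h_def by simp
  moreover have "\<forall>z. z \<notin> V \<longrightarrow> h z = 0" using f(3) unfolding h_def by auto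
  ultimately show ?thesis by blast
qed

lemma Cp_finite_support:
  assumes cont: "continuous_map (Cp_top X) euclideanreal \<phi>"
    and hom: "\<And>c f. f \<in> Cp_set X \<Longrightarrow> \<phi> (\<lambda>x. c * f x) = c * \<phi> f"
  shows "\<exists>J. finite J \<and> J \<subseteq> topspace X \<and> (\<forall>f\<in>Cp_set X. (\<forall>x\<in>J. f x = 0) \<longrightarrow> \<phi> f = 0)"
proof -
  have z: "(\<lambda>x. 0) \<in> Cp_set X" by (rule Cp_zero)
  have phi0: "\<phi> (\<lambda>x. 0) = 0" using hom[OF z, of 0] by simp
  define Ob where "Ob = {f \<in> topspace (Cp_top X). \<phi> f \<in> {-1<..<1}}"
  have "openin (Cp_top X) Ob" unfolding Ob_def
    by (rule openin_continuous_map_preimage[OF cont]) simp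
  then obtain T where T: "openin euclidean T" "Ob = T \<inter> Cp_set X"
    unfolding Cp_top_def openin_subtopology by blast
  have zOb: "(\<lambda>x. 0) \<in> Ob" unfolding Ob_def using z phi0 by simp
  have "openin (product_topology (\<lambda>i. euclideanreal) UNIV) T"
    using T(1) by (simp add: euclidean_product_topology)
  then obtain U where U: "finite {i \<in> UNIV. U i \<noteq> topspace euclideanreal}"
      "\<forall>i\<in>UNIV. openin euclideanreal (U i)" "(\<lambda>x. 0::real) \<in> Pi\<^sub>E UNIV U" "Pi\<^sub>E UNIV U \<subseteq> T"
    using zOb T(2) unfolding openin_product_topology_alt by blast
  define J0 where "J0 = {i. U i \<noteq> UNIV}"
  have fJ0: "finite J0" using U(1) unfolding J0_def by simp
  show ?thesis
  proof (intro exI conjI ballI impI)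
    show "finite (J0 \<inter> topspace X)" using fJ0 by simp
    show "J0 \<inter> topspace X \<subseteq> topspace X" by simp
    fix f assume f: "f \<in> Cp_set X" and fz: "\<forall>x\<in>J0 \<inter> topspace X. f x = 0"
    have fz0: "f x = 0" if "x \<in> J0" for x
      using fz that Cp_out[OF f] by blast
    have small: "\<bar>c * \<phi> f\<bar> < 1" for c
    proof -
      have gC: "(\<lambda>x. c * f x) \<in> Cp_set X" by (rule Cp_scale[OF f])
      have "(\<lambda>x. c * f x) \<in> Pi\<^sub>E UNIV U"
      proof -
        have "c * f i \<in> U i" for i
        proof (cases "i \<in> J0")
          case True
          then have "f i = 0" by (rule fz0)
          moreover have "(0::real) \<in> U i" using U(3) by (auto simp: PiE_iff)
          ultimately show ?thesis by simp
        next
          case False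
          then show ?thesis unfolding J0_def by simp
        qed
        then show ?thesis by (simp add: PiE_iff)
      qed
      then have "(\<lambda>x. c * f x) \<in> Ob" using U(4) T(2) gC by blast
      then have "\<phi> (\<lambda>x. c * f x) \<in> {-1<..<1}" unfolding Ob_def by simp
      then show ?thesis using hom[OF f, of c] by auto
    qed
    show "\<phi> f = 0"
    proof (rule ccontr)
      assume "\<phi> f \<noteq> 0"
      then have "\<bar>(1 / \<phi> f) * \<phi> f\<bar> = 1" by simp
      then show False using small[of "1 / \<phi> f"] by simp
    qed
  qed
qed

lemma card_ge_disjoint:
  assumes "finite A"
    and disj: "\<And>x x'. x \<in> A1 \<Longrightarrow> x' \<in> A1 \<Longrightarrow> x \<noteq> x' \<Longrightarrow> U x \<inter> U x' = {}"
    and meet: "\<And>x. x \<in> A1 \<Longrightarrow> A \<inter> U x \<noteq> {}"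
  shows "card A1 \<le> card A"
proof -
  define p where "p x = (SOME z. z \<in> A \<inter> U x)" for x
  have p: "p x \<in> A \<inter> U x" if "x \<in> A1" for x
    unfolding p_def using meet[OF that] by (metis all_not_in_conv someI_ex)
  have "inj_on p A1"
  proof (rule inj_onI)
    fix x x' assume x: "x \<in> A1" and x': "x' \<in> A1" and e: "p x = p x'"
    show "x = x'"
    proof (rule ccontr)
      assume "x \<noteq> x'"
      then have "U x \<inter> U x' = {}" using disj x x' by blast
      moreover have "p x \<in> U x" "p x' \<in> U x'" using p x x' by auto
      ultimately show False using e by auto
    qed
  qed
  moreover have "p ` A1 \<subseteq> A" using p by auto
  ultimately show ?thesis using card_inj_on_le assms(1) by blast
qed

locale cpsetup =
  fixes K :: "'a topology" and L :: "'c topology"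
    and R :: "('a \<Rightarrow> real) \<Rightarrow> 'c \<Rightarrow> real" and S :: "('c \<Rightarrow> real) \<Rightarrow> 'a \<Rightarrow> real"
  assumes cK: "compact_space K" and hK: "Hausdorff_space K"
    and mL: "metrizable_space L" and cL: "compact_space L" and uL: "uncountable (topspace L)"
    and noK: "\<not> (\<exists>Z. closedin K Z \<and> uncountable Z \<and> metrizable_space (subtopology K Z))"
    and R_in: "\<And>f. f \<in> Cp_set K \<Longrightarrow> R f \<in> Cp_set L"
    and R_add: "\<And>f g. f \<in> Cp_set K \<Longrightarrow> g \<in> Cp_set K \<Longrightarrow> R (\<lambda>x. f x + g x) = (\<lambda>y. R f y + R g y)"
    and R_scale: "\<And>c f. f \<in> Cp_set K \<Longrightarrow> R (\<lambda>x. c * f x) = (\<lambda>y. c * R f y)"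
    and R_cont: "\<And>y. continuous_map (Cp_top K) euclideanreal (\<lambda>f. R f y)"
    and S_in: "\<And>g. g \<in> Cp_set L \<Longrightarrow> S g \<in> Cp_set K"
    and S_scale: "\<And>c g. g \<in> Cp_set L \<Longrightarrow> S (\<lambda>y. c * g y) = (\<lambda>x. c * S g x)"
    and S_cont: "\<And>x. continuous_map (Cp_top L) euclideanreal (\<lambda>g. S g x)"
    and RS: "\<And>g. g \<in> Cp_set L \<Longrightarrow> R (S g) = g"
begin

lemma tK: "t1_space K" using hK by (rule Hausdorff_imp_t1_space)
lemma nK: "normal_space K" using compact_Hausdorff_or_regular_imp_normal_space cK hK by blast
lemma hL: "Hausdorff_space L" using mL by (rule metrizable_imp_Hausdorff_space)
lemma tL: "t1_space L" using hL by (rule Hausdorff_imp_t1_space)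
lemma nL: "normal_space L" using mL by (rule metrizable_imp_normal_space)

lemma R_diff:
  assumes f: "f \<in> Cp_set K" and g: "g \<in> Cp_set K"
  shows "R (\<lambda>x. f x - g x) y = R f y - R g y"
proof -
  have g': "(\<lambda>x. (-1) * g x) \<in> Cp_set K" by (rule Cp_scale[OF g])
  have "(\<lambda>x. f x - g x) = (\<lambda>x. f x + (\<lambda>x. (-1) * g x) x)" by simp
  then have "R (\<lambda>x. f x - g x) y = R f y + R (\<lambda>x. (-1) * g x) y"
    using R_add[OF f g'] by simp
  also have "\<dots> = R f y - R g y" using R_scale[OF g, of "-1"] by simp
  finally show ?thesis .
qed

definition adm :: "'c \<Rightarrow> 'a set \<Rightarrow> bool" where
  "adm y A \<longleftrightarrow> finite A \<and> A \<subseteq> topspace K \<and> (\<forall>f\<in>Cp_set K. (\<forall>x\<in>A. f x = 0) \<longrightarrow> R f y = 0)"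

definition N :: "'c \<Rightarrow> nat" where
  "N y = (LEAST n. \<exists>A. adm y A \<and> card A = n)"

definition Am :: "'c \<Rightarrow> 'a set" where
  "Am y = (SOME A. adm y A \<and> card A = N y)"

lemma adm_ex: "\<exists>A. adm y A"
proof -
  have "\<exists>J. finite J \<and> J \<subseteq> topspace K \<and> (\<forall>f\<in>Cp_set K. (\<forall>x\<in>J. f x = 0) \<longrightarrow> R f y = 0)"
    by (rule Cp_finite_support[OF R_cont]) (simp add: R_scale)
  then show ?thesis unfolding adm_def by blast
qed

lemma Am: "adm y (Am y) \<and> card (Am y) = N y"
proof -
  obtain A where "adm y A" using adm_ex by blast
  then have "\<exists>n A. adm y A \<and> card A = n" by blast
  then have "\<exists>A. adm y A \<and> card A = N y" unfolding N_def by (rule LeastI_ex)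
  then show ?thesis unfolding Am_def by (rule someI_ex)
qed

lemma Am_adm: "adm y (Am y)" using Am by blast
lemma Am_card: "card (Am y) = N y" using Am by blast
lemma Am_fin: "finite (Am y)" using Am_adm unfolding adm_def by blast
lemma Am_sub: "Am y \<subseteq> topspace K" using Am_adm unfolding adm_def by blast
lemma Am_van: "f \<in> Cp_set K \<Longrightarrow> (\<And>x. x \<in> Am y \<Longrightarrow> f x = 0) \<Longrightarrow> R f y = 0"
  using Am_adm unfolding adm_def by blast

lemma N_le: "adm y A \<Longrightarrow> N y \<le> card A"
  unfolding N_def by (rule Least_le) blast

lemma S2:
  assumes x: "x \<in> Am y" and V: "openin K V" "x \<in> V"
  shows "\<exists>f\<in>Cp_set K. (\<forall>z. z \<notin> V \<longrightarrow> f z = 0) \<and> R f y \<noteq> 0"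
proof -
  define A' where "A' = Am y - {x}"
  have fA': "finite A'" unfolding A'_def using Am_fin by simp
  have sA': "A' \<subseteq> topspace K" unfolding A'_def using Am_sub by blast
  have "card A' < card (Am y)" unfolding A'_def using Am_fin x by (rule card_Diff1_less)
  then have "\<not> adm y A'" using N_le Am_card by fastforce
  then obtain g where g: "g \<in> Cp_set K" "\<And>z. z \<in> A' \<Longrightarrow> g z = 0" "R g y \<noteq> 0"
    using fA' sA' unfolding adm_def by blast
  have "closedin K A'" using t1_space_closedin_finite[THEN iffD1, OF tK] fA' sA' by blast
  then have V': "openin K (V - A')" by (rule openin_diff[OF V(1)])
  have xV': "x \<in> V - A'" using V(2) unfolding A'_def by blast
  have xt: "x \<in> topspace K" using x Am_sub by blast
  obtain h where h: "h \<in> Cp_set K" "h x = 1" "\<forall>z. z \<notin> V - A' \<longrightarrow> h z = 0"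
    using Cp_bump[OF nK tK xt V' xV'] by blast
  define f where "f = (\<lambda>z. g z * h z)"
  have fC: "f \<in> Cp_set K" unfolding f_def by (rule Cp_mult[OF g(1) h(1)])
  have fV: "\<forall>z. z \<notin> V \<longrightarrow> f z = 0" unfolding f_def using h(3) by auto
  have "R (\<lambda>z. g z - f z) y = 0"
  proof (rule Am_van)
    show "(\<lambda>z. g z - f z) \<in> Cp_set K" by (rule Cp_diff[OF g(1) fC])
    fix z assume z: "z \<in> Am y"
    show "g z - f z = 0"
    proof (cases "z = x")
      case True
      then show ?thesis unfolding f_def using h(2) by simp
    next
      case False
      then have "z \<in> A'" unfolding A'_def using z by blast
      then show ?thesis unfolding f_def using g(2) by simp
    qed
  qed
  then have "R f y = R g y" using R_diff[OF g(1) fC] by simp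
  then show ?thesis using fC fV g(3) by auto
qed

lemma meets:
  assumes y1: "y1 \<in> topspace L" and x: "x \<in> Am y1" and V: "openin K V" "x \<in> V"
  shows "\<exists>W. openin L W \<and> y1 \<in> W \<and> (\<forall>y\<in>W. \<forall>A. adm y A \<longrightarrow> A \<inter> V \<noteq> {})"
proof -
  obtain f where f: "f \<in> Cp_set K" "\<forall>z. z \<notin> V \<longrightarrow> f z = 0" "R f y1 \<noteq> 0"
    using S2[OF x V] by blast
  define W where "W = {y \<in> topspace L. R f y \<in> - {0}}"
  have "openin euclideanreal (- {0::real})" using open_Compl[OF closed_singleton] by simp
  then have oW: "openin L W" unfolding W_def
    by (rule openin_continuous_map_preimage[OF Cp_cont[OF R_in[OF f(1)]]])
  show ?thesis
  proof (intro exI conjI ballI allI impI)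
    show "openin L W" by (rule oW)
    show "y1 \<in> W" unfolding W_def using y1 f(3) by simp
    fix y A assume y: "y \<in> W" and A: "adm y A"
    show "A \<inter> V \<noteq> {}"
    proof
      assume e: "A \<inter> V = {}"
      have "\<forall>z\<in>A. f z = 0" using e f(2) by blast
      then have "R f y = 0" using A f(1) unfolding adm_def by blast
      then show False using y unfolding W_def by simp
    qed
  qed
qed

lemma sep:
  assumes fA: "finite A" and sA: "A \<subseteq> topspace K"
  shows "\<exists>U. (\<forall>x\<in>A. openin K (U x) \<and> x \<in> U x) \<and> (\<forall>x\<in>A. \<forall>x'\<in>A. x \<noteq> x' \<longrightarrow> U x \<inter> U x' = {})"
proof -
  have "\<forall>x y. \<exists>U V. x \<in> topspace K \<and> y \<in> topspace K \<and> x \<noteq> y \<longrightarrow>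
          openin K U \<and> openin K V \<and> x \<in> U \<and> y \<in> V \<and> disjnt U V"
    using hK unfolding Hausdorff_space_def by blast
  then obtain U1 V1 where UV: "\<And>x y. x \<in> topspace K \<Longrightarrow> y \<in> topspace K \<Longrightarrow> x \<noteq> y \<Longrightarrow>
          openin K (U1 x y) \<and> openin K (V1 x y) \<and> x \<in> U1 x y \<and> y \<in> V1 x y \<and> disjnt (U1 x y) (V1 x y)"
    by metis
  define U where "U x = topspace K \<inter> \<Inter> ((\<lambda>x'. U1 x x' \<inter> V1 x' x) ` (A - {x}))" for x
  show ?thesis
  proof (intro exI conjI ballI impI)
    fix x assume x: "x \<in> A"
    show "openin K (U x)" unfolding U_def
    proof (rule openin_Int_Inter)
      show "finite ((\<lambda>x'. U1 x x' \<inter> V1 x' x) ` (A - {x}))" using fA by simp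
      show "openin K (topspace K)" by simp
      fix X assume "X \<in> (\<lambda>x'. U1 x x' \<inter> V1 x' x) ` (A - {x})"
      then obtain x' where x': "x' \<in> A" "x' \<noteq> x" "X = U1 x x' \<inter> V1 x' x" by blast
      have "openin K (U1 x x')" "openin K (V1 x' x)"
        using UV[of x x'] UV[of x' x] x x' sA by auto
      then show "openin K X" using x' by blast
    qed
    show "x \<in> U x" unfolding U_def using x sA UV by auto
  next
    fix x x' assume x: "x \<in> A" and x': "x' \<in> A" and ne: "x \<noteq> x'"
    have "U x \<subseteq> U1 x x'" unfolding U_def using x' ne by blast
    moreover have "U x' \<subseteq> V1 x x'" unfolding U_def using x ne by blast
    moreover have "disjnt (U1 x x') (V1 x x')" using UV[of x x'] x x' ne sA by blast
    ultimately show "U x \<inter> U x' = {}" by (auto simp: disjnt_def)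
  qed
qed

end

context cpsetup begin

lemma lsc:
  assumes y1: "y1 \<in> topspace L"
  shows "\<exists>W U. openin L W \<and> y1 \<in> W \<and> (\<forall>x\<in>Am y1. openin K (U x) \<and> x \<in> U x) \<and>
     (\<forall>x\<in>Am y1. \<forall>x'\<in>Am y1. x \<noteq> x' \<longrightarrow> U x \<inter> U x' = {}) \<and>
     (\<forall>y\<in>W. \<forall>A. adm y A \<longrightarrow> (\<forall>x\<in>Am y1. A \<inter> U x \<noteq> {}))"
proof -
  obtain U where U: "\<forall>x\<in>Am y1. openin K (U x) \<and> x \<in> U x"
      "\<forall>x\<in>Am y1. \<forall>x'\<in>Am y1. x \<noteq> x' \<longrightarrow> U x \<inter> U x' = {}"
    using sep[OF Am_fin Am_sub] by blast
  have "\<forall>x\<in>Am y1. \<exists>W. openin L W \<and> y1 \<in> W \<and> (\<forall>y\<in>W. \<forall>A. adm y A \<longrightarrow> A \<inter> U x \<noteq> {})"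
  proof
    fix x assume x: "x \<in> Am y1"
    have "openin K (U x)" "x \<in> U x" using U(1) x by auto
    then show "\<exists>W. openin L W \<and> y1 \<in> W \<and> (\<forall>y\<in>W. \<forall>A. adm y A \<longrightarrow> A \<inter> U x \<noteq> {})"
      using meets[OF y1 x] by blast
  qed
  then obtain Wx where Wx: "\<And>x. x \<in> Am y1 \<Longrightarrow> openin L (Wx x) \<and> y1 \<in> Wx x \<and>
        (\<forall>y\<in>Wx x. \<forall>A. adm y A \<longrightarrow> A \<inter> U x \<noteq> {})"
    by (metis (no_types, lifting) bchoice)
  define W where "W = topspace L \<inter> \<Inter> (Wx ` Am y1)"
  have oW: "openin L W" unfolding W_def
  proof (rule openin_Int_Inter)
    show "finite (Wx ` Am y1)" using Am_fin by simp
    show "openin L (topspace L)" by simp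
    fix X assume "X \<in> Wx ` Am y1"
    then show "openin L X" using Wx by blast
  qed
  have yW: "y1 \<in> W" unfolding W_def using y1 Wx by blast
  have "\<forall>y\<in>W. \<forall>A. adm y A \<longrightarrow> (\<forall>x\<in>Am y1. A \<inter> U x \<noteq> {})"
  proof (intro ballI allI impI)
    fix y A x assume y: "y \<in> W" and A: "adm y A" and x: "x \<in> Am y1"
    have "y \<in> Wx x" using y x unfolding W_def by blast
    then show "A \<inter> U x \<noteq> {}" using Wx[OF x] A by blast
  qed
  then show ?thesis using oW yW U by (intro exI[of _ W] exI[of _ U] conjI) assumption+
qed

lemma N_lsc:
  assumes y1: "y1 \<in> topspace L"
  shows "\<exists>W. openin L W \<and> y1 \<in> W \<and> (\<forall>y\<in>W. N y1 \<le> N y)"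
proof -
  obtain W U where WU: "openin L W" "y1 \<in> W"
     "\<forall>x\<in>Am y1. \<forall>x'\<in>Am y1. x \<noteq> x' \<longrightarrow> U x \<inter> U x' = {}"
     "\<forall>y\<in>W. \<forall>A. adm y A \<longrightarrow> (\<forall>x\<in>Am y1. A \<inter> U x \<noteq> {})"
    using lsc[OF y1] by (elim exE conjE) (rule that)
  have "N y1 \<le> N y" if y: "y \<in> W" for y
  proof -
    have "card (Am y1) \<le> card (Am y)"
    proof (rule card_ge_disjoint[OF Am_fin])
      show "\<And>x x'. x \<in> Am y1 \<Longrightarrow> x' \<in> Am y1 \<Longrightarrow> x \<noteq> x' \<Longrightarrow> U x \<inter> U x' = {}"
        using WU(3) by blast
      show "\<And>x. x \<in> Am y1 \<Longrightarrow> Am y \<inter> U x \<noteq> {}" using WU(4) y Am_adm by blast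
    qed
    then show ?thesis using Am_card by simp
  qed
  then show ?thesis using WU(1,2) by blast
qed

lemma N_closed: "closedin L {y \<in> topspace L. N y \<le> n}"
proof -
  have "openin L {y \<in> topspace L. n < N y}"
  proof (subst openin_subopen, intro ballI)
    fix y1 assume y1: "y1 \<in> {y \<in> topspace L. n < N y}"
    obtain W where W: "openin L W" "y1 \<in> W" "\<forall>y\<in>W. N y1 \<le> N y" using N_lsc y1 by blast
    have "W \<subseteq> {y \<in> topspace L. n < N y}"
      using W y1 openin_subset[OF W(1)] by fastforce
    then show "\<exists>T. openin L T \<and> y1 \<in> T \<and> T \<subseteq> {y \<in> topspace L. n < N y}" using W by blast
  qed
  moreover have "topspace L - {y \<in> topspace L. N y \<le> n} = {y \<in> topspace L. n < N y}" by auto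
  ultimately show ?thesis unfolding closedin_def by auto
qed

lemma coords:
  assumes y1: "y1 \<in> topspace L"
  shows "\<exists>W p. openin L W \<and> y1 \<in> W \<and> (\<forall>y\<in>W. N y1 \<le> N y) \<and>
     (\<forall>y\<in>W. N y = N y1 \<longrightarrow> Am y = p y ` Am y1) \<and>
     (\<forall>x\<in>Am y1. continuous_map (subtopology L {y\<in>W. N y = N y1}) K (\<lambda>y. p y x))"
proof -
  obtain W U where WU: "openin L W" "y1 \<in> W" "\<forall>x\<in>Am y1. openin K (U x) \<and> x \<in> U x"
     "\<forall>x\<in>Am y1. \<forall>x'\<in>Am y1. x \<noteq> x' \<longrightarrow> U x \<inter> U x' = {}"
     "\<forall>y\<in>W. \<forall>A. adm y A \<longrightarrow> (\<forall>x\<in>Am y1. A \<inter> U x \<noteq> {})"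
    using lsc[OF y1] by (elim exE conjE) (rule that)
  have Wt: "W \<subseteq> topspace L" using openin_subset[OF WU(1)] .
  have Nge: "\<forall>y\<in>W. N y1 \<le> N y"
  proof
    fix y assume y: "y \<in> W"
    have "card (Am y1) \<le> card (Am y)"
    proof (rule card_ge_disjoint[OF Am_fin])
      show "\<And>x x'. x \<in> Am y1 \<Longrightarrow> x' \<in> Am y1 \<Longrightarrow> x \<noteq> x' \<Longrightarrow> U x \<inter> U x' = {}"
        using WU(4) by blast
      show "\<And>x. x \<in> Am y1 \<Longrightarrow> Am y \<inter> U x \<noteq> {}" using WU(5) y Am_adm by blast
    qed
    then show "N y1 \<le> N y" using Am_card by simp
  qed
  define p where "p y x = (SOME z. z \<in> Am y \<inter> U x)" for y x
  have pin: "p y x \<in> Am y \<inter> U x" if "y \<in> W" "x \<in> Am y1" for y x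
  proof -
    have "Am y \<inter> U x \<noteq> {}" using WU(5) that Am_adm by blast
    then show ?thesis unfolding p_def by (metis all_not_in_conv someI_ex)
  qed
  have key: "Am y = p y ` Am y1 \<and> (\<forall>x\<in>Am y1. Am y \<inter> U x = {p y x})"
    if y: "y \<in> W" and Ny: "N y = N y1" for y
  proof -
    have inj: "inj_on (p y) (Am y1)"
    proof (rule inj_onI)
      fix x x' assume x: "x \<in> Am y1" and x': "x' \<in> Am y1" and e: "p y x = p y x'"
      show "x = x'"
      proof (rule ccontr)
        assume ne: "x \<noteq> x'"
        have a: "p y x \<in> U x" using pin[OF y x] by blast
        have b: "p y x' \<in> U x'" using pin[OF y x'] by blast
        have "U x \<inter> U x' = {}" using WU(4) x x' ne by blast
        then show False using a b e by auto
      qed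
    qed
    have sub: "p y ` Am y1 \<subseteq> Am y" using pin y by blast
    have "card (p y ` Am y1) = card (Am y)"
      using card_image[OF inj] Am_card Ny by simp
    then have eq: "p y ` Am y1 = Am y" by (rule card_subset_eq[OF Am_fin sub])
    have "Am y \<inter> U x = {p y x}" if x: "x \<in> Am y1" for x
    proof
      show "{p y x} \<subseteq> Am y \<inter> U x" using pin y x by blast
      show "Am y \<inter> U x \<subseteq> {p y x}"
      proof
        fix z assume z: "z \<in> Am y \<inter> U x"
        then obtain x' where x': "x' \<in> Am y1" "z = p y x'" using eq by blast
        have "z \<in> U x'" using pin y x' by blast
        then have "x = x'" using WU(4) x x'(1) z by blast
        then show "z \<in> {p y x}" using x' by simp
      qed
    qed
    then show ?thesis using eq by blast
  qed
  define D where "D = {y\<in>W. N y = N y1}"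
  have cont: "continuous_map (subtopology L D) K (\<lambda>y. p y x)" if x: "x \<in> Am y1" for x
  proof -
    have tD: "topspace (subtopology L D) = D" unfolding D_def using Wt by auto
    show ?thesis unfolding continuous_map_def
    proof (intro conjI allI impI)
      show "(\<lambda>y. p y x) \<in> topspace (subtopology L D) \<rightarrow> topspace K"
        using tD pin x Am_sub unfolding D_def by blast
      fix V assume V: "openin K V"
      show "openin (subtopology L D) {y \<in> topspace (subtopology L D). p y x \<in> V}"
      proof (subst openin_subopen, intro ballI)
        fix y2 assume y2: "y2 \<in> {y \<in> topspace (subtopology L D). p y x \<in> V}"
        then have y2D: "y2 \<in> D" and y2V: "p y2 x \<in> V" using tD by auto
        have y2W: "y2 \<in> W" using y2D unfolding D_def by blast
        have pz: "p y2 x \<in> Am y2" "p y2 x \<in> U x" using pin[OF y2W x] by auto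
        have oVU: "openin K (V \<inter> U x)" using V WU(3) x by blast
        obtain W2 where W2: "openin L W2" "y2 \<in> W2" "\<forall>y\<in>W2. \<forall>A. adm y A \<longrightarrow> A \<inter> (V \<inter> U x) \<noteq> {}"
          using meets[OF _ pz(1) oVU] y2W Wt y2V pz(2) by blast
        show "\<exists>T. openin (subtopology L D) T \<and> y2 \<in> T \<and> T \<subseteq> {y \<in> topspace (subtopology L D). p y x \<in> V}"
        proof (intro exI conjI)
          show "openin (subtopology L D) (W2 \<inter> D)" unfolding openin_subtopology using W2(1) by blast
          show "y2 \<in> W2 \<inter> D" using W2(2) y2D by blast
          show "W2 \<inter> D \<subseteq> {y \<in> topspace (subtopology L D). p y x \<in> V}"
          proof
            fix y assume y: "y \<in> W2 \<inter> D"
            then have yW: "y \<in> W" and Ny: "N y = N y1" unfolding D_def by auto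
            have "Am y \<inter> (V \<inter> U x) \<noteq> {}" using W2(3) y Am_adm by blast
            then obtain z where z: "z \<in> Am y" "z \<in> V" "z \<in> U x" by blast
            have "Am y \<inter> U x = {p y x}" using key[OF yW Ny] x by blast
            then have "z = p y x" using z by blast
            then have "p y x \<in> V" using z by simp
            then show "y \<in> {y \<in> topspace (subtopology L D). p y x \<in> V}" using y tD by blast
          qed
        qed
      qed
    qed
  qed
  show ?thesis
  proof (intro exI[of _ W] exI[of _ p] conjI ballI impI)
    show "openin L W" by (rule WU(1))
    show "y1 \<in> W" by (rule WU(2))
    show "N y1 \<le> N y" if "y \<in> W" for y using Nge that by blast
    show "Am y = p y ` Am y1" if "y \<in> W" "N y = N y1" for y using key[OF that] by blast
    show "continuous_map (subtopology L {y \<in> W. N y = N y1}) K (\<lambda>y. p y x)" if "x \<in> Am y1" for x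
      using cont[OF that] unfolding D_def .
  qed
qed

definition BS :: "'a \<Rightarrow> 'c set" where
  "BS x = (SOME J. finite J \<and> J \<subseteq> topspace L \<and> (\<forall>g\<in>Cp_set L. (\<forall>w\<in>J. g w = 0) \<longrightarrow> S g x = 0))"

lemma BS: "finite (BS x) \<and> BS x \<subseteq> topspace L \<and> (\<forall>g\<in>Cp_set L. (\<forall>w\<in>BS x. g w = 0) \<longrightarrow> S g x = 0)"
proof -
  have "\<exists>J. finite J \<and> J \<subseteq> topspace L \<and> (\<forall>g\<in>Cp_set L. (\<forall>w\<in>J. g w = 0) \<longrightarrow> S g x = 0)"
    by (rule Cp_finite_support[OF S_cont]) (simp add: S_scale)
  then show ?thesis unfolding BS_def by (rule someI_ex)
qed

lemma fibre:
  assumes y: "y \<in> topspace L"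
  shows "\<exists>z\<in>Am y. y \<in> BS z"
proof (rule ccontr)
  assume na: "\<not> (\<exists>z\<in>Am y. y \<in> BS z)"
  define B where "B = \<Union> (BS ` Am y)"
  have fB: "finite B" unfolding B_def using Am_fin BS by blast
  have sB: "B \<subseteq> topspace L" unfolding B_def using BS by blast
  have "closedin L B" using t1_space_closedin_finite[THEN iffD1, OF tL] fB sB by blast
  then have oV: "openin L (topspace L - B)" by (rule openin_diff[OF openin_topspace])
  have yV: "y \<in> topspace L - B" using y na unfolding B_def by blast
  obtain g where g: "g \<in> Cp_set L" "g y = 1" "\<forall>z. z \<notin> topspace L - B \<longrightarrow> g z = 0"
    using Cp_bump[OF nL tL y oV yV] by blast
  have "R (S g) y = 0"
  proof (rule Am_van)
    show "S g \<in> Cp_set K" by (rule S_in[OF g(1)])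
    fix z assume z: "z \<in> Am y"
    have "\<forall>w\<in>BS z. g w = 0" using g(3) z unfolding B_def by blast
    then show "S g z = 0" using BS g(1) by blast
  qed
  then show False using RS[OF g(1)] g(2) by simp
qed

lemma countable_C:
  assumes C: "C \<subseteq> topspace L" and cu: "countable (\<Union> (Am ` C))"
  shows "countable C"
proof -
  have "C \<subseteq> \<Union> (BS ` (\<Union> (Am ` C)))" using fibre C by blast
  moreover have "countable (\<Union> (BS ` (\<Union> (Am ` C))))"
    by (rule countable_UN[OF cu]) (simp add: BS countable_finite)
  ultimately show ?thesis using countable_subset by blast
qed

end

context cpsetup begin

lemma contradiction: False
proof -
  define D where "D n = {y \<in> topspace L. N y = n}" for n
  have tU: "topspace L = (\<Union>n. D n)" unfolding D_def by auto
  have "\<exists>n. uncountable (D n)"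
  proof (rule ccontr)
    assume "\<not> (\<exists>n. uncountable (D n))"
    then have "\<And>n. countable (D n)" by blast
    then have "countable (\<Union>n. D n)" by (rule countable_UN[OF countableI_type])
    then show False using uL tU by simp
  qed
  then obtain n where un: "uncountable (D n)" by blast
  obtain BL where BL0: "countable BL \<and> (\<forall>V \<in> BL. openin L V) \<and>
             (\<forall>U x. openin L U \<and> x \<in> U \<longrightarrow> (\<exists>V \<in> BL. x \<in> V \<and> V \<subseteq> U))"
    using compact_metrizable_second_countable[OF mL cL] unfolding second_countable_def by (elim exE)
  have BL: "countable BL" "\<And>V. V \<in> BL \<Longrightarrow> openin L V"
     "\<And>U x. openin L U \<Longrightarrow> x \<in> U \<Longrightarrow> \<exists>V\<in>BL. x \<in> V \<and> V \<subseteq> U"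
    using BL0 by auto
  have reg: "regular_space L" using mL by (rule metrizable_imp_regular_space)
  have nb: "neighbourhood_base_of (closedin L) L" using reg neighbourhood_base_of_closedin by blast
  define Good where "Good y1 B \<longleftrightarrow> B \<in> BL \<and> y1 \<in> B \<and> (\<exists>W p. openin L W \<and> L closure_of B \<subseteq> W \<and>
      (\<forall>y\<in>W. N y1 \<le> N y) \<and> (\<forall>y\<in>W. N y = N y1 \<longrightarrow> Am y = p y ` Am y1) \<and>
      (\<forall>x\<in>Am y1. continuous_map (subtopology L {y\<in>W. N y = N y1}) K (\<lambda>y. p y x)))" for y1 B
  have exB: "\<exists>B. Good y1 B" if y1: "y1 \<in> topspace L" for y1
  proof -
    obtain W p where Wp: "openin L W" "y1 \<in> W" "\<forall>y\<in>W. N y1 \<le> N y"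
       "\<forall>y\<in>W. N y = N y1 \<longrightarrow> Am y = p y ` Am y1"
       "\<forall>x\<in>Am y1. continuous_map (subtopology L {y\<in>W. N y = N y1}) K (\<lambda>y. p y x)"
      using coords[OF y1] by (elim exE conjE) (rule that)
    have "\<exists>U V. openin L U \<and> closedin L V \<and> y1 \<in> U \<and> U \<subseteq> V \<and> V \<subseteq> W"
      using nb[unfolded neighbourhood_base_of, rule_format, OF conjI[OF Wp(1) Wp(2)]] .
    then obtain U V where UV: "openin L U" "closedin L V" "y1 \<in> U" "U \<subseteq> V" "V \<subseteq> W"
      by blast
    obtain B where B: "B \<in> BL" "y1 \<in> B" "B \<subseteq> U" using BL(3)[OF UV(1) UV(3)] by blast
    have "L closure_of B \<subseteq> V" using closure_of_minimal[of B V L] UV B by blast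
    then have "L closure_of B \<subseteq> W" using UV by blast
    then have "Good y1 B" unfolding Good_def
      by (intro conjI exI[of _ W] exI[of _ p] B(1) B(2) Wp(1) Wp(3) Wp(4) Wp(5))
    then show ?thesis by blast
  qed
  define \<beta> where "\<beta> y1 = (SOME B. Good y1 B)" for y1
  have \<beta>: "Good y1 (\<beta> y1)" if "y1 \<in> topspace L" for y1
    unfolding \<beta>_def using exB[OF that] by (rule someI_ex)
  have Dt: "D n \<subseteq> topspace L" unfolding D_def by blast
  obtain y1 where y1: "y1 \<in> D n" and unc: "uncountable (\<beta> y1 \<inter> D n)"
  proof -
    have "D n \<subseteq> (\<Union>B\<in>\<beta> ` D n. B \<inter> D n)"
    proof
      fix y assume y: "y \<in> D n"
      have "y \<in> \<beta> y" using \<beta>[of y] y Dt unfolding Good_def by blast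
      then show "y \<in> (\<Union>B\<in>\<beta> ` D n. B \<inter> D n)" using y by blast
    qed
    moreover have "countable (\<beta> ` D n)"
    proof (rule countable_subset[OF _ BL(1)])
      show "\<beta> ` D n \<subseteq> BL" using \<beta> Dt unfolding Good_def by blast
    qed
    ultimately have "\<exists>y1\<in>D n. uncountable (\<beta> y1 \<inter> D n)"
    proof -
      assume sub: "D n \<subseteq> (\<Union>B\<in>\<beta> ` D n. B \<inter> D n)" and cb: "countable (\<beta> ` D n)"
      show ?thesis
      proof (rule ccontr)
        assume "\<not> (\<exists>y1\<in>D n. uncountable (\<beta> y1 \<inter> D n))"
        then have "\<And>B. B \<in> \<beta> ` D n \<Longrightarrow> countable (B \<inter> D n)" by blast
        then have "countable (\<Union>B\<in>\<beta> ` D n. B \<inter> D n)" by (rule countable_UN[OF cb])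
        then show False using sub un countable_subset by blast
      qed
    qed
    then show ?thesis using that by blast
  qed
  have y1t: "y1 \<in> topspace L" using y1 Dt by blast
  have Ny1: "N y1 = n" using y1 unfolding D_def by blast
  obtain W p where Wp: "openin L W" "L closure_of (\<beta> y1) \<subseteq> W" "\<forall>y\<in>W. N y1 \<le> N y"
       "\<forall>y\<in>W. N y = N y1 \<longrightarrow> Am y = p y ` Am y1"
       "\<forall>x\<in>Am y1. continuous_map (subtopology L {y\<in>W. N y = N y1}) K (\<lambda>y. p y x)"
    using \<beta>[OF y1t] unfolding Good_def by (elim exE conjE) (rule that)
  have \<beta>B: "\<beta> y1 \<in> BL" using \<beta>[OF y1t] unfolding Good_def by blast
  define C where "C = L closure_of (\<beta> y1) \<inter> {y \<in> topspace L. N y \<le> n}"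
  have cC: "closedin L C" unfolding C_def by (intro closedin_Int closedin_closure_of N_closed)
  have Ct: "C \<subseteq> topspace L" using closedin_subset[OF cC] .
  have CW: "C \<subseteq> {y\<in>W. N y = N y1}"
  proof
    fix y assume y: "y \<in> C"
    then have yW: "y \<in> W" using Wp(2) unfolding C_def by blast
    then have "n \<le> N y" using Wp(3) Ny1 by blast
    moreover have "N y \<le> n" using y unfolding C_def by blast
    ultimately show "y \<in> {y\<in>W. N y = N y1}" using yW Ny1 by simp
  qed
  have "\<beta> y1 \<inter> D n \<subseteq> C"
  proof -
    have "\<beta> y1 \<subseteq> topspace L" using openin_subset[OF BL(2)[OF \<beta>B]] .
    then have "\<beta> y1 \<subseteq> L closure_of (\<beta> y1)" by (rule closure_of_subset)
    then show ?thesis unfolding C_def D_def by auto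
  qed
  then have uC: "uncountable C" using unc countable_subset by blast
  have tC: "topspace (subtopology L C) = C" using Ct by auto
  have cpC: "compact_space (subtopology L C)"
    by (rule compact_space_subtopology[OF closedin_compact_space[OF cL cC]])
  have mC: "metrizable_space (subtopology L C)" using mL by (rule metrizable_space_subtopology)
  have AmC: "\<Union> (Am ` C) = (\<Union>x\<in>Am y1. (\<lambda>y. p y x) ` C)"
  proof -
    have "Am y = p y ` Am y1" if "y \<in> C" for y using Wp(4) CW that by blast
    then show ?thesis by blast
  qed
  have "uncountable (\<Union> (Am ` C))" using countable_C[OF Ct] uC by blast
  then obtain x where x: "x \<in> Am y1" and ux: "uncountable ((\<lambda>y. p y x) ` C)"
    unfolding AmC using Am_fin[of y1] by (metis countable_UN countable_finite)
  have contx: "continuous_map (subtopology L C) K (\<lambda>y. p y x)"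
    using continuous_map_from_subtopology_mono[OF _ CW] Wp(5) x by blast
  have m: "metrizable_space (subtopology K ((\<lambda>y. p y x) ` C))"
    using metrizable_image[OF cpC mC hK contx] tC by simp
  have "compactin (subtopology L C) (topspace (subtopology L C))" using cpC by (simp add: compact_space_def)
  then have "compactin K ((\<lambda>y. p y x) ` C)" using image_compactin[OF _ contx] tC by metis
  then have "closedin K ((\<lambda>y. p y x) ` C)" by (rule compactin_imp_closedin[OF hK])
  then show False using noK m ux by blast
qed

end

lemma lin_sub_zero: "lin_subspace E \<Longrightarrow> (\<lambda>x. 0) \<in> E"
  unfolding lin_subspace_def by blast
lemma lin_sub_add: "lin_subspace E \<Longrightarrow> f \<in> E \<Longrightarrow> g \<in> E \<Longrightarrow> (\<lambda>x. f x + g x) \<in> E"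
  unfolding lin_subspace_def by blast
lemma lin_sub_scale: "lin_subspace E \<Longrightarrow> f \<in> E \<Longrightarrow> (\<lambda>x. c * f x) \<in> E"
  unfolding lin_subspace_def by blast
lemma lin_sub_diff:
  assumes "lin_subspace E" "f \<in> E" "g \<in> E" shows "(\<lambda>x. f x - g x) \<in> E"
proof -
  have "(\<lambda>x. (-1) * g x) \<in> E" by (rule lin_sub_scale[OF assms(1,3)])
  then have "(\<lambda>x. f x + (-1) * g x) \<in> E" by (rule lin_sub_add[OF assms(1,2)])
  then show ?thesis by simp
qed

lemma EF_zero:
  assumes "E \<inter> F = {\<lambda>x. 0}" "a \<in> E" "b \<in> F" "\<And>x. a x = b x"
  shows "a = (\<lambda>x. 0)"
proof -
  have "a = b" using assms(4) by (rule ext)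
  then have "a \<in> E \<inter> F" using assms(2,3) by simp
  then show ?thesis using assms(1) by blast
qed

theorem theorem1p6:
  fixes K1 :: "'a topology" and K2 :: "'b topology" and L :: "'c topology"
  assumes "compact_space K1" "Hausdorff_space K1"
      and "compact_space K2" "Hausdorff_space K2"
      and "\<not> (\<exists>S. closedin K1 S \<and> uncountable S \<and> metrizable_space (subtopology K1 S))"
      and "\<not> (\<exists>S. closedin K2 S \<and> uncountable S \<and> metrizable_space (subtopology K2 S))"
      and "metrizable_space L" "compact_space L" "uncountable (topspace L)"
  shows "\<not> contains_complemented_Cp (prod_topology K1 K2) L"
proof
  assume cc: "contains_complemented_Cp (prod_topology K1 K2) L"
  define K where "K = prod_topology K1 K2"
  obtain E F P Q T where
    E: "E \<subseteq> Cp_set K" and lE: "lin_subspace E" and lF: "lin_subspace F" and EF: "E \<inter> F = {\<lambda>x. 0}"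
    and PQ: "\<forall>h\<in>Cp_set K. P h \<in> E \<and> Q h \<in> F \<and> h = (\<lambda>x. P h x + Q h x)"
    and Pc: "continuous_map (Cp_top K) (Cp_top K) P"
    and Tl: "lin_map_on E T" and Th: "homeomorphic_map (subtopology (Cp_top K) E) (Cp_top L) T"
    using cc unfolding contains_complemented_Cp_def K_def[symmetric] by blast
  obtain Ti where hm: "homeomorphic_maps (subtopology (Cp_top K) E) (Cp_top L) T Ti"
    using Th homeomorphic_map_maps by blast
  have tE: "topspace (subtopology (Cp_top K) E) = E" using E by auto
  have Tc: "continuous_map (subtopology (Cp_top K) E) (Cp_top L) T"
    and Tic: "continuous_map (Cp_top L) (subtopology (Cp_top K) E) Ti"
    and TiT: "\<And>u. u \<in> E \<Longrightarrow> Ti (T u) = u"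
    and TTi: "\<And>g. g \<in> Cp_set L \<Longrightarrow> T (Ti g) = g"
    using hm tE unfolding homeomorphic_maps_def by auto
  have T_in: "T u \<in> Cp_set L" if "u \<in> E" for u
    using continuous_map_image_subset_topspace[OF Tc] that tE by auto
  have Ti_in: "Ti g \<in> E" if "g \<in> Cp_set L" for g
    using continuous_map_image_subset_topspace[OF Tic] that tE by auto
  have T_add: "\<And>u v. u \<in> E \<Longrightarrow> v \<in> E \<Longrightarrow> T (\<lambda>x. u x + v x) = (\<lambda>y. T u y + T v y)"
    and T_scale: "\<And>c u. u \<in> E \<Longrightarrow> T (\<lambda>x. c * u x) = (\<lambda>y. c * T u y)"
    using Tl unfolding lin_map_on_def by blast+
  have P_in: "P h \<in> E" and Q_in: "Q h \<in> F" and PQ_eq: "\<And>x. h x = P h x + Q h x"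
    if "h \<in> Cp_set K" for h
    using PQ that by (metis (no_types, lifting))+
  have P_add: "P (\<lambda>x. f x + g x) = (\<lambda>x. P f x + P g x)" if f: "f \<in> Cp_set K" and g: "g \<in> Cp_set K" for f g
  proof -
    define h where "h = (\<lambda>x. f x + g x)"
    have h: "h \<in> Cp_set K" unfolding h_def by (rule Cp_add[OF f g])
    define a where "a = (\<lambda>x. P h x - (P f x + P g x))"
    define b where "b = (\<lambda>x. (Q f x + Q g x) - Q h x)"
    have aE: "a \<in> E" unfolding a_def
      by (intro lin_sub_diff[OF lE] lin_sub_add[OF lE] P_in h f g)
    have bF: "b \<in> F" unfolding b_def
      by (intro lin_sub_diff[OF lF] lin_sub_add[OF lF] Q_in h f g)
    have "a x = b x" for x
      using PQ_eq[OF h, of x] PQ_eq[OF f, of x] PQ_eq[OF g, of x] unfolding a_def b_def h_def by simp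
    then have "a = (\<lambda>x. 0)" by (rule EF_zero[OF EF aE bF])
    then have "P h x = P f x + P g x" for x unfolding a_def by (metis eq_iff_diff_eq_0)
    then show ?thesis unfolding h_def by (rule ext)
  qed
  have P_scale: "P (\<lambda>x. c * f x) = (\<lambda>x. c * P f x)" if f: "f \<in> Cp_set K" for c f
  proof -
    define h where "h = (\<lambda>x. c * f x)"
    have h: "h \<in> Cp_set K" unfolding h_def by (rule Cp_scale[OF f])
    define a where "a = (\<lambda>x. P h x - c * P f x)"
    define b where "b = (\<lambda>x. c * Q f x - Q h x)"
    have aE: "a \<in> E" unfolding a_def
      by (intro lin_sub_diff[OF lE] lin_sub_scale[OF lE] P_in h f)
    have bF: "b \<in> F" unfolding b_def
      by (intro lin_sub_diff[OF lF] lin_sub_scale[OF lF] Q_in h f)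
    have "a x = b x" for x
      using PQ_eq[OF h, of x] PQ_eq[OF f, of x] unfolding a_def b_def h_def by (simp add: algebra_simps)
    then have "a = (\<lambda>x. 0)" by (rule EF_zero[OF EF aE bF])
    then have "P h x = c * P f x" for x unfolding a_def by (metis eq_iff_diff_eq_0)
    then show ?thesis unfolding h_def by (rule ext)
  qed
  have P_id: "P u = u" if u: "u \<in> E" for u
  proof -
    have h: "u \<in> Cp_set K" using u E by blast
    define a where "a = (\<lambda>x. u x - P u x)"
    have aE: "a \<in> E" unfolding a_def by (intro lin_sub_diff[OF lE] P_in h u)
    have "a x = Q u x" for x using PQ_eq[OF h, of x] unfolding a_def by simp
    then have "a = (\<lambda>x. 0)" by (rule EF_zero[OF EF aE Q_in[OF h]])
    then have "P u x = u x" for x unfolding a_def by (metis eq_iff_diff_eq_0)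
    then show ?thesis by (rule ext)
  qed
  define R where "R f = T (P f)" for f
  have "cpsetup K L R Ti"
  proof (rule cpsetup.intro)
    show "compact_space K" unfolding K_def using assms(1,3) compact_space_prod_topology by blast
    show "Hausdorff_space K" unfolding K_def using assms(2,4) Hausdorff_space_prod_topology by blast
    show "metrizable_space L" "compact_space L" "uncountable (topspace L)" by (fact assms)+
    show "\<not> (\<exists>Z. closedin K Z \<and> uncountable Z \<and> metrizable_space (subtopology K Z))"
      unfolding K_def by (rule prod_no_metrizable[OF assms(1-6)])
    show "\<And>f. f \<in> Cp_set K \<Longrightarrow> R f \<in> Cp_set L" unfolding R_def using T_in P_in by blast
    show "R (\<lambda>x. f x + g x) = (\<lambda>y. R f y + R g y)" if "f \<in> Cp_set K" "g \<in> Cp_set K" for f g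
      unfolding R_def using P_add[OF that] T_add[OF P_in[OF that(1)] P_in[OF that(2)]] by simp
    show "R (\<lambda>x. c * f x) = (\<lambda>y. c * R f y)" if "f \<in> Cp_set K" for c f
      unfolding R_def using P_scale[OF that] T_scale[OF P_in[OF that]] by simp
    show "continuous_map (Cp_top K) euclideanreal (\<lambda>f. R f y)" for y
    proof -
      have "continuous_map (Cp_top K) (subtopology (Cp_top K) E) P"
        using Pc P_in by (simp add: continuous_map_in_subtopology image_subset_iff)
      then have "continuous_map (Cp_top K) (Cp_top L) (T \<circ> P)" using Tc by (rule continuous_map_compose)
      then have "continuous_map (Cp_top K) euclideanreal ((\<lambda>g. g y) \<circ> (T \<circ> P))"
        using Cp_eval_cont by (rule continuous_map_compose)
      then show ?thesis unfolding R_def o_def .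
    qed
    show "\<And>g. g \<in> Cp_set L \<Longrightarrow> Ti g \<in> Cp_set K" using Ti_in E by blast
    show "Ti (\<lambda>y. c * g y) = (\<lambda>x. c * Ti g x)" if g: "g \<in> Cp_set L" for c g
    proof -
      have u: "Ti g \<in> E" by (rule Ti_in[OF g])
      have cu: "(\<lambda>x. c * Ti g x) \<in> E" by (rule lin_sub_scale[OF lE u])
      have "T (\<lambda>x. c * Ti g x) = (\<lambda>y. c * g y)" using T_scale[OF u] TTi[OF g] by simp
      then have "Ti (\<lambda>y. c * g y) = Ti (T (\<lambda>x. c * Ti g x))" by simp
      also have "\<dots> = (\<lambda>x. c * Ti g x)" by (rule TiT[OF cu])
      finally show ?thesis .
    qed
    show "continuous_map (Cp_top L) euclideanreal (\<lambda>g. Ti g x)" for x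
    proof -
      have "continuous_map (Cp_top L) (Cp_top K) Ti"
        using Tic by (simp add: continuous_map_in_subtopology)
      then have "continuous_map (Cp_top L) euclideanreal ((\<lambda>g. g x) \<circ> Ti)"
        using Cp_eval_cont by (rule continuous_map_compose)
      then show ?thesis unfolding o_def .
    qed
    show "R (Ti g) = g" if g: "g \<in> Cp_set L" for g
      unfolding R_def using P_id[OF Ti_in[OF g]] TTi[OF g] by simp
  qed
  then show False by (rule cpsetup.contradiction)
qed

end
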